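(* Let $\mathcal X$ be a real normed space and $\mathcal Y$ a normed space. Suppose that $c:\mathcal X\to\mathcal Y$ is an orthogonally constant mapping. Then there is a mapping $g:\mathbb R\to\mathcal Y$ such that $c(x)=g(\|x\|)$ for each $x\in\mathcal X$.
   Context: For $x,y$ in a real normed space $\mathcal X$, isosceles orthogonality is defined by $x\perp y$ if and only if $\|x+y\|=\|x-y\|$. A mapping $c:\mathcal X\to\mathcal Y$ is called orthogonally constant if $c(x+y)=c(x-y)$ for all $x,y\in\mathcal X$ with $x\perp y$. *)

theory Defs
  imports "HOL-Analysis.Analysis"
begin

definition iso_orth :: "'a::real_normed_vector \<Rightarrow> 'a \<Rightarrow> bool" where
  "iso_orth x y \<longleftrightarrow> norm (x + y) = norm (x - y)"

definition orthogonally_constant :: "('a::real_normed_vector \<Rightarrow> 'b) \<Rightarrow> bool" where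
  "orthogonally_constant c \<longleftrightarrow> (\<forall>x y. iso_orth x y \<longrightarrow> c (x + y) = c (x - y))"

end

theory Submission
  imports Defs
begin

lemma oc_eq:
  fixes c :: "'a::real_normed_vector \<Rightarrow> 'b"
  assumes "orthogonally_constant c" "norm x = norm y"
  shows "c x = c y"
proof -
  let ?u = "(1/2) *\<^sub>R (x + y)" and ?v = "(1/2) *\<^sub>R (x - y)"
  have a: "?u + ?v = x" by (simp add: algebra_simps scaleR_2 [symmetric])
  have b: "?u - ?v = y" by (simp add: algebra_simps scaleR_2 [symmetric])
  have "iso_orth ?u ?v" unfolding iso_orth_def a b by (rule assms(2))
  then have "c (?u + ?v) = c (?u - ?v)" using assms(1) unfolding orthogonally_constant_def by blast
  then show ?thesis using a b by simp
qed

theorem proposition2p3: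
  fixes c :: "'a::real_normed_vector \<Rightarrow> 'b::real_normed_vector"
  assumes "orthogonally_constant c"
  shows "\<exists>g :: real \<Rightarrow> 'b. \<forall>x. c x = g (norm x)"
proof (intro exI allI)
  fix x :: 'a
  have "norm (SOME y::'a. norm y = norm x) = norm x" by (rule someI) (rule refl)
  then show "c x = (\<lambda>r. c (SOME y::'a. norm y = r)) (norm x)"
    using oc_eq[OF assms] by metis
qed

end
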